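(* Let $N = 2^L$ and $M \in \mathbb{N}$. For an integer $1 \le L_c \le L$ and ranks $r_0, \ldots, r_{L_c-1} \in \mathbb{N}_{>0}$, the truncated hierarchical decomposition with $L_c$ levels has parameters $\mathbf{a}^{0,j,\gamma} \in \mathbb{R}^M$ ($j\in[N]$, $\gamma\in[r_0]$), $\mathbf{a}^{l,j,\gamma} \in \mathbb{R}^{r_{l-1}}$ ($l \in [L_c-1]$, $j\in[N/2^l]$, $\gamma\in[r_l]$), and $\mathbf{a}^{L_c} \in \mathbb{R}^{r_{L_c-1}}$, and generates the order-$N$ tensor (dimension $M$ in each mode) $$\mathcal{A} = \sum_{\alpha=1}^{r_{L_c-1}} a^{L_c}_\alpha \bigotimes_{j=1}^{2^{L-L_c+1}} \phi^{L_c-1,j,\alpha},$$ where $\phi^{0,j,\alpha} := \mathbf{a}^{0,j,\alpha}$ and, for $1\le l\le L_c-1$, $\phi^{l,j,\gamma} = \sum_{\alpha=1}^{r_{l-1}} a^{l,j,\gamma}_\alpha\, \phi^{l-1,2j-1,\alpha} \otimes \phi^{l-1,2j,\alpha}$ (a tensor of order $2^l$). Let $L \ge L_1 > L_2 \ge 1$. Let $\mathcal{A}^{(1)}$ be generated by the truncated decomposition with $L_1$ levels and ranks $r^{(1)}_0,\ldots,r^{(1)}_{L_1-1}$, and define $r := \min\{r^{(1)}_0, \ldots, r^{(1)}_{L_2-1}, M\}$. Then in the Euclidean space of parameter configurations $\{\mathbf{a}^{(1),l,j,\gamma}\}_{l,j,\gamma}$ (together with $\mathbf{a}^{(1),L_1}$)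 of $\mathcal{A}^{(1)}$'s decomposition, the set of configurations for which there exist ranks $r^{(2)}_0,\ldots,r^{(2)}_{L_2-1}$ with $r^{(2)}_{L_2-1} < r^{2^{L-L_2}}$ and parameters of a truncated decomposition with $L_2$ levels and these ranks generating a tensor $\mathcal{A}^{(2)}$ equal to $\mathcal{A}^{(1)}$, has Lebesgue measure zero. The same holds if $\mathcal{A}^{(1)}$'s decomposition is constrained to be shared, i.e. $\mathbf{a}^{(1),l,j,\gamma} = \mathbf{a}^{(1),l,\gamma}$ for all $j$, and one considers the space of configurations of $\{\mathbf{a}^{(1),l,\gamma}\}_{l,\gamma}$ (together with $\mathbf{a}^{(1),L_1}$), while $\mathcal{A}^{(2)}$'s decomposition is unconstrained.
   Context: $[k]=\{1,\ldots,k\}$; $\otimes$ is the tensor product $(\mathcal{A}\otimes\mathcal{B})_{d_1\ldots d_{P+Q}}=\mathcal{A}_{d_1\ldots d_P}\mathcal{B}_{d_{P+1}\ldots d_{P+Q}}$, and $\bigotimes_{j=1}^k \mathcal{B}_j = \mathcal{B}_1\otimes\cdots\otimes\mathcal{B}_k$; $a_\alpha$ denotes entry $\alpha$ of vector $\mathbf{a}$. Measure is Lebesgue measure. *)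

theory Defs
  imports "HOL-Analysis.Analysis"
begin

text \<open>Tensors are represented as real-valued functions on index lists
(0-based indices). A tensor of order P evaluated at a list ds of length P.\<close>

type_synonym tensor = "nat list \<Rightarrow> real"

definition tprod :: "nat \<Rightarrow> tensor \<Rightarrow> tensor \<Rightarrow> tensor" where
  "tprod p A B = (\<lambda>ds. A (take p ds) * B (drop p ds))"

definition tprod_blocks :: "nat \<Rightarrow> nat \<Rightarrow> (nat \<Rightarrow> tensor) \<Rightarrow> tensor" where
  "tprod_blocks k p B = (\<lambda>ds. \<Prod>j<k. B j (take p (drop (j * p) ds)))"

text \<open>Parameter indices (l, j, gamma, alpha), 0-based: entry alpha of the
vector a^{l,j,gamma}; the top vector a^{Lc} is stored at (Lc, 0, 0, alpha).\<close>
type_synonym pidx = "nat \<times> nat \<times> nat \<times> nat"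

fun phi :: "(pidx \<Rightarrow> real) \<Rightarrow> (nat \<Rightarrow> nat) \<Rightarrow> nat \<Rightarrow> nat \<Rightarrow> nat \<Rightarrow> tensor" where
  "phi \<theta> r 0 j g = (\<lambda>ds. \<theta> (0, j, g, hd ds))"
| "phi \<theta> r (Suc l) j g =
     (\<lambda>ds. \<Sum>\<alpha><r l. \<theta> (Suc l, j, g, \<alpha>) *
        tprod (2^l) (phi \<theta> r l (2*j) \<alpha>) (phi \<theta> r l (2*j+1) \<alpha>) ds)"

definition gen_tensor :: "nat \<Rightarrow> nat \<Rightarrow> (nat \<Rightarrow> nat) \<Rightarrow> (pidx \<Rightarrow> real) \<Rightarrow> tensor" where
  "gen_tensor L Lc r \<theta> = (\<lambda>ds. \<Sum>\<alpha><r (Lc - 1). \<theta> (Lc, 0, 0, \<alpha>) *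
      tprod_blocks (2^(L - Lc + 1)) (2^(Lc - 1)) (\<lambda>j. phi \<theta> r (Lc - 1) j \<alpha>) ds)"

definition param_index :: "nat \<Rightarrow> nat \<Rightarrow> nat \<Rightarrow> (nat \<Rightarrow> nat) \<Rightarrow> pidx set" where
  "param_index L M Lc r =
     {(0, j, g, a) | j g a. j < 2^L \<and> g < r 0 \<and> a < M}
   \<union> {(l, j, g, a) | l j g a. 1 \<le> l \<and> l < Lc \<and> j < 2^L div 2^l \<and> g < r l \<and> a < r (l - 1)}
   \<union> {(Lc, 0, 0, a) | a. a < r (Lc - 1)}"

text \<open>Shared parameters (l, gamma, alpha), top vector at (Lc, 0, alpha).\<close>
definition shared_index :: "nat \<Rightarrow> nat \<Rightarrow> (nat \<Rightarrow> nat) \<Rightarrow> (nat \<times> nat \<times> nat) set" where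
  "shared_index M Lc r =
     {(0, g, a) | g a. g < r 0 \<and> a < M}
   \<union> {(l, g, a) | l g a. 1 \<le> l \<and> l < Lc \<and> g < r l \<and> a < r (l - 1)}
   \<union> {(Lc, 0, a) | a. a < r (Lc - 1)}"

definition expand_shared :: "(nat \<times> nat \<times> nat \<Rightarrow> real) \<Rightarrow> pidx \<Rightarrow> real" where
  "expand_shared \<theta>s = (\<lambda>(l, j, g, a). \<theta>s (l, g, a))"

definition tensor_eq :: "nat \<Rightarrow> nat \<Rightarrow> tensor \<Rightarrow> tensor \<Rightarrow> bool" where
  "tensor_eq N M A B \<longleftrightarrow> (\<forall>ds. length ds = N \<and> (\<forall>d\<in>set ds. d < M) \<longrightarrow> A ds = B ds)"

definition low_rep :: "nat \<Rightarrow> nat \<Rightarrow> nat \<Rightarrow> nat \<Rightarrow> tensor \<Rightarrow> bool" where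
  "low_rep L M L2 rr A \<longleftrightarrow>
     (\<exists>r2 :: nat \<Rightarrow> nat. \<exists>\<theta>2 :: pidx \<Rightarrow> real.
        (\<forall>l<L2. r2 l > 0) \<and> r2 (L2 - 1) < rr ^ (2^(L - L2)) \<and>
        tensor_eq (2^L) M (gen_tensor L L2 r2 \<theta>2) A)"

end

theory Submission
  imports Defs "HOL-Computational_Algebra.Polynomial" "Jordan_Normal_Form.Determinant"
begin


inductive poly_fun :: "(('i \<Rightarrow> real) \<Rightarrow> real) \<Rightarrow> bool" where
  pconst: "poly_fun (\<lambda>_. c)"
| pproj: "poly_fun (\<lambda>\<theta>. \<theta> i)"
| padd: "poly_fun f \<Longrightarrow> poly_fun g \<Longrightarrow> poly_fun (\<lambda>\<theta>. f \<theta> + g \<theta>)"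
| pmult: "poly_fun f \<Longrightarrow> poly_fun g \<Longrightarrow> poly_fun (\<lambda>\<theta>. f \<theta> * g \<theta>)"

lemma poly_fun_sum: assumes that: "\<And>a. a \<in> A \<Longrightarrow> poly_fun (f a)" shows "poly_fun (\<lambda>\<theta>. \<Sum>a\<in>A. f a \<theta>)"
proof (cases "finite A")
  case True
  have "finite A \<Longrightarrow> (\<forall>a\<in>A. poly_fun (f a)) \<longrightarrow> poly_fun (\<lambda>\<theta>. \<Sum>a\<in>A. f a \<theta>)"
    by (induction A rule: finite_induct) (auto intro: poly_fun.intros)
  then show ?thesis using True that by auto
qed (auto intro: poly_fun.intros)

lemma poly_fun_prod: assumes that: "\<And>a. a \<in> A \<Longrightarrow> poly_fun (f a)" shows "poly_fun (\<lambda>\<theta>. \<Prod>a\<in>A. f a \<theta>)"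
proof (cases "finite A")
  case True
  have "finite A \<Longrightarrow> (\<forall>a\<in>A. poly_fun (f a)) \<longrightarrow> poly_fun (\<lambda>\<theta>. \<Prod>a\<in>A. f a \<theta>)"
    by (induction A rule: finite_induct) (auto intro: poly_fun.intros)
  then show ?thesis using True that by auto
qed (auto intro: poly_fun.intros)

lemma poly_fun_meas: "poly_fun f \<Longrightarrow> f \<in> borel_measurable (PiM I (\<lambda>_. lborel))"
proof (induction rule: poly_fun.induct)
  case (pproj i)
  show ?case
  proof (cases "i \<in> I")
    case True then show ?thesis by (auto intro: measurable_component_singleton)
  next
    case False
    have "\<forall>\<theta>\<in>space (PiM I (\<lambda>_. lborel)). \<theta> i = undefined"
      using False by (auto simp: space_PiM PiE_def extensional_def)
    then show ?thesis
      by (subst measurable_cong[where g="\<lambda>_. undefined"]) auto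
  qed
qed auto

lemma poly_fun_univ:
  assumes "poly_fun f"
  shows "\<exists>P. (\<forall>\<theta> x. f (\<theta>(i:=x)) = poly (P \<theta>) x) \<and> (\<forall>k. poly_fun (\<lambda>\<theta>. coeff (P \<theta>) k))"
  using assms
proof (induction rule: poly_fun.induct)
  case (pconst c)
  show ?case by (rule exI[of _ "\<lambda>_. [:c:]"]) (auto intro: poly_fun.intros)
next
  case (pproj j)
  show ?case
  proof (cases "j = i")
    case True
    then show ?thesis by (intro exI[of _ "\<lambda>_. [:0,1:]"]) (auto intro: poly_fun.intros)
  next
    case False
    have "poly_fun (\<lambda>\<theta>. coeff [:\<theta> j:] k)" for k
      by (cases k) (auto intro: poly_fun.intros)
    then show ?thesis using False by (intro exI[of _ "\<lambda>\<theta>. [:\<theta> j:]"]) auto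
  qed
next
  case (padd f g)
  then obtain P Q where P: "\<forall>\<theta> x. f (\<theta>(i:=x)) = poly (P \<theta>) x" "\<forall>k. poly_fun (\<lambda>\<theta>. coeff (P \<theta>) k)"
    and Q: "\<forall>\<theta> x. g (\<theta>(i:=x)) = poly (Q \<theta>) x" "\<forall>k. poly_fun (\<lambda>\<theta>. coeff (Q \<theta>) k)" by blast
  have "\<forall>\<theta> x. f (\<theta>(i:=x)) + g (\<theta>(i:=x)) = poly (P \<theta> + Q \<theta>) x"
    using P(1) Q(1) by (simp del: fun_upd_apply)
  moreover have "\<forall>k. poly_fun (\<lambda>\<theta>. coeff (P \<theta> + Q \<theta>) k)"
    using P(2) Q(2) by (auto intro: poly_fun.intros)
  ultimately show ?case by - (rule exI, rule conjI, assumption+)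
next
  case (pmult f g)
  then obtain P Q where P: "\<forall>\<theta> x. f (\<theta>(i:=x)) = poly (P \<theta>) x" "\<forall>k. poly_fun (\<lambda>\<theta>. coeff (P \<theta>) k)"
    and Q: "\<forall>\<theta> x. g (\<theta>(i:=x)) = poly (Q \<theta>) x" "\<forall>k. poly_fun (\<lambda>\<theta>. coeff (Q \<theta>) k)" by blast
  have "\<forall>\<theta> x. f (\<theta>(i:=x)) * g (\<theta>(i:=x)) = poly (P \<theta> * Q \<theta>) x"
    using P(1) Q(1) by (simp del: fun_upd_apply)
  moreover have "\<forall>k. poly_fun (\<lambda>\<theta>. coeff (P \<theta> * Q \<theta>) k)"
    using P(2) Q(2) by (auto simp: coeff_mult intro!: poly_fun_sum poly_fun.intros)
  ultimately show ?case by - (rule exI, rule conjI, assumption+)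
qed

lemma psf: "product_sigma_finite (\<lambda>_. lborel)"
  unfolding product_sigma_finite_def using sigma_finite_lborel by auto

lemma poly_zero_null:
  fixes I :: "'i set"
  assumes "finite I"
  shows "poly_fun f \<Longrightarrow> \<theta>0 \<in> I \<rightarrow>\<^sub>E UNIV \<Longrightarrow> f \<theta>0 \<noteq> 0 \<Longrightarrow>
    {\<theta> \<in> I \<rightarrow>\<^sub>E UNIV. f \<theta> = 0} \<in> null_sets (PiM I (\<lambda>_. lborel))"
  using assms
proof (induction I arbitrary: f \<theta>0 rule: finite_induct)
  case empty
  then have "{\<theta> \<in> {} \<rightarrow>\<^sub>E UNIV. f \<theta> = 0} = {}" by auto
  then show ?case by (simp only:) simp
next
  case (insert i I)
  interpret product_sigma_finite "\<lambda>_. lborel" by (rule psf)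
  let ?Z = "{\<theta> \<in> insert i I \<rightarrow>\<^sub>E UNIV. f \<theta> = 0}"
  have fm: "f \<in> borel_measurable (PiM (insert i I) (\<lambda>_. lborel))" by (rule poly_fun_meas[OF insert.prems(1)])
  have Zeq: "?Z = f -` {0} \<inter> space (PiM (insert i I) (\<lambda>_. lborel))"
    by (auto simp: space_PiM)
  have Zs: "?Z \<in> sets (PiM (insert i I) (\<lambda>_. lborel))"
    unfolding Zeq by (rule measurable_sets[OF fm]) auto
  obtain P where P: "\<forall>\<theta> x. f (\<theta>(i:=x)) = poly (P \<theta>) x" "\<forall>k. poly_fun (\<lambda>\<theta>. coeff (P \<theta>) k)"
    using poly_fun_univ[OF insert.prems(1)] by blast
  define \<theta>0' where "\<theta>0' = \<theta>0(i := undefined)"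
  have t0': "\<theta>0' \<in> I \<rightarrow>\<^sub>E UNIV" using insert.prems(2) insert.hyps(2)
    by (auto simp: \<theta>0'_def PiE_def extensional_def)
  have "\<theta>0 = \<theta>0'(i := \<theta>0 i)" by (auto simp: \<theta>0'_def)
  then have "poly (P \<theta>0') (\<theta>0 i) \<noteq> 0" using P(1) insert.prems(3) by metis
  then have "P \<theta>0' \<noteq> 0" by auto
  then obtain k where k: "coeff (P \<theta>0') k \<noteq> 0" by (metis leading_coeff_0_iff)
  let ?N = "{\<theta> \<in> I \<rightarrow>\<^sub>E UNIV. coeff (P \<theta>) k = 0}"
  have N: "?N \<in> null_sets (PiM I (\<lambda>_. lborel))"
    by (rule insert.IH[OF P(2)[rule_format] t0' k])
  have AE: "AE \<theta> in PiM I (\<lambda>_. lborel). (\<integral>\<^sup>+ x. indicator ?Z (\<theta>(i:=x)) \<partial>lborel) = 0"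
  proof (rule AE_I'[OF N], rule subsetI)
    fix \<theta> assume th: "\<theta> \<in> {\<theta> \<in> space (PiM I (\<lambda>_. lborel)). (\<integral>\<^sup>+ x. indicator ?Z (\<theta>(i:=x)) \<partial>lborel) \<noteq> 0}"
    show "\<theta> \<in> ?N"
    proof (rule ccontr)
      assume "\<theta> \<notin> ?N"
      with th have "coeff (P \<theta>) k \<noteq> 0" by (auto simp: space_PiM)
      then have "P \<theta> \<noteq> 0" by auto
      then have fin: "finite {x. poly (P \<theta>) x = 0}" by (rule poly_roots_finite)
      have "(\<integral>\<^sup>+ x. indicator ?Z (\<theta>(i:=x)) \<partial>lborel) \<le> (\<integral>\<^sup>+ x. indicator {x. poly (P \<theta>) x = 0} x \<partial>lborel)"
        by (rule nn_integral_mono) (auto simp: indicator_def P(1))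
      also have "\<dots> = emeasure lborel {x. poly (P \<theta>) x = 0}"
        by (rule nn_integral_indicator) (use finite_imp_null_set_lborel[OF fin, THEN null_setsD2] in simp)
      also have "\<dots> = 0" using finite_imp_null_set_lborel[OF fin] by auto
      finally show False using th by auto
    qed
  qed
  have "emeasure (PiM (insert i I) (\<lambda>_. lborel)) ?Z = (\<integral>\<^sup>+ \<theta>. indicator ?Z \<theta> \<partial>PiM (insert i I) (\<lambda>_. lborel))"
    using Zs by simp
  also have "\<dots> = (\<integral>\<^sup>+ \<theta>. (\<integral>\<^sup>+ x. indicator ?Z (\<theta>(i:=x)) \<partial>lborel) \<partial>PiM I (\<lambda>_. lborel))"
    by (rule product_nn_integral_insert) (use insert.hyps Zs in auto)
  also have "\<dots> = (\<integral>\<^sup>+ \<theta>. 0 \<partial>PiM I (\<lambda>_. lborel::real measure))"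
    using AE by (rule nn_integral_cong_AE)
  also have "\<dots> = 0" by simp
  finally show ?case using Zs by auto
qed



lemma det_lowrank:
  fixes G :: "nat \<Rightarrow> nat \<Rightarrow> real"
  assumes R: "R < n" and G: "\<And>u v. u < n \<Longrightarrow> v < n \<Longrightarrow> G u v = (\<Sum>a<R. X u a * Y a v)"
  shows "Determinant.det (mat n n (\<lambda>(u,v). G u v)) = 0"
proof -
  define X' where "X' = mat n n (\<lambda>(u,a). X u a)"
  define Y' where "Y' = mat n n (\<lambda>(a,v). if a < R then Y a v else 0)"
  have eq: "mat n n (\<lambda>(u,v). G u v) = X' * Y'"
  proof (rule eq_matI)
    fix u v assume uv: "u < dim_row (X' * Y')" "v < dim_col (X' * Y')"
    then have u: "u < n" and v: "v < n" by (auto simp: X'_def Y'_def)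
    have "(X' * Y') $$ (u,v) = (\<Sum>a<n. X u a * (if a < R then Y a v else 0))"
      using u v by (simp add: X'_def Y'_def scalar_prod_def row_def col_def atLeast0LessThan)
    also have "\<dots> = (\<Sum>a<R. X u a * Y a v)"
      using R by (intro sum.mono_neutral_cong_right) auto
    finally show "mat n n (\<lambda>(u,v). G u v) $$ (u,v) = (X' * Y') $$ (u,v)" using G u v by simp
  qed (auto simp: X'_def Y'_def)
  have "Determinant.det Y' = 0"
  proof -
    show ?thesis using R unfolding Determinant.det_def Y'_def
      by (simp del: prod_zero_iff) (intro sum.neutral ballI, auto intro!: prod_zero bexI[of _ "n-1"])
  qed
  then show ?thesis unfolding eq
    by (subst det_mult[of _ n]) (auto simp: X'_def Y'_def)
qed



definition win :: "nat \<Rightarrow> nat \<Rightarrow> nat list \<Rightarrow> nat list" where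
  "win l j xs = take (2^l) (drop (j*2^l) xs)"

lemma tprod_win: "tprod (2^l) F G (win (Suc l) j xs) = F (win l (2*j) xs) * G (win l (2*j+1) xs)"
proof -
  have a: "take (2^l) (win (Suc l) j xs) = win l (2*j) xs"
    by (simp add: win_def take_take mult_ac)
  have b: "drop (2^l) (win (Suc l) j xs) = win l (2*j+1) xs"
    by (simp add: win_def drop_take drop_drop algebra_simps)
  show ?thesis unfolding tprod_def a b ..
qed

lemma poly_phi: "poly_fun (\<lambda>\<theta>. phi (\<lambda>x. \<theta> (c x)) r l j g ds)"
  by (induction l arbitrary: j g ds) (auto simp: tprod_def intro!: poly_fun_sum poly_fun.intros)

lemma poly_gen: "poly_fun (\<lambda>\<theta>. gen_tensor L Lc r (\<lambda>x. \<theta> (c x)) ds)"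
  unfolding gen_tensor_def tprod_blocks_def
  by (auto intro!: poly_fun_sum poly_fun_prod poly_fun.intros poly_phi)

lemma det_mat_expand: "Determinant.det (mat n n (\<lambda>(u,v). F u v)) =
   (\<Sum>p | p permutes {0..<n}. signof p * (\<Prod>i = 0..<n. F i (p i)))"
  unfolding Determinant.det_def
  by (auto intro!: sum.cong prod.cong simp: permutes_in_image)

lemma poly_det: assumes "\<And>u v. poly_fun (\<lambda>\<theta>. F \<theta> u v)"
  shows "poly_fun (\<lambda>\<theta>. Determinant.det (mat n n (\<lambda>(u,v). F \<theta> u v)))"
  unfolding det_mat_expand
  by (auto intro!: poly_fun_sum poly_fun_prod poly_fun.intros assms)

definition dig :: "nat \<Rightarrow> nat \<Rightarrow> nat \<Rightarrow> nat" where "dig b u k = u div b^k mod b"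
definition blk :: "nat \<Rightarrow> nat \<Rightarrow> nat \<Rightarrow> nat \<Rightarrow> nat \<Rightarrow> nat list" where
  "blk p b u v j = replicate p (if even j then dig b u (j div 2) else dig b v (j div 2))"
definition dsv :: "nat \<Rightarrow> nat \<Rightarrow> nat \<Rightarrow> nat \<Rightarrow> nat \<Rightarrow> nat list" where
  "dsv p b K u v = concat (map (blk p b u v) [0..<2*K])"

lemma concat_block:
  assumes "\<And>i. length (f i) = p" and "j < m"
  shows "take p (drop (j*p) (concat (map f [0..<m]))) = f j"
proof -
  have sp: "[0..<m] = [0..<j] @ [j..<m]" using assms(2) upt_add_eq_append[of 0 j "m-j"] by simp
  have l: "length (concat (map f [0..<j])) = j*p"
    using assms(1) by (simp add: length_concat comp_def sum_list_triv)
  have "[j..<m] = j # [Suc j..<m]" using assms(2) by (simp add: upt_conv_Cons)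
  then show ?thesis unfolding sp using l assms(1) by simp
qed

lemma dsv_block: "j < 2*K \<Longrightarrow> take p (drop (j*p) (dsv p b K u v)) = blk p b u v j"
  unfolding dsv_def by (rule concat_block) (auto simp: blk_def)

lemma dsv_length: "length (dsv p b K u v) = 2*K*p"
  by (simp add: dsv_def blk_def length_concat comp_def sum_list_triv)

lemma dig_lt: "0 < b \<Longrightarrow> dig b u k < b" by (simp add: dig_def)

lemma dsv_set: "0 < b \<Longrightarrow> d \<in> set (dsv p b K u v) \<Longrightarrow> d < b"
  by (auto simp: dsv_def blk_def dig_lt split: if_splits)

lemma prod_evenodd: "(\<Prod>j<2*(K::nat). h j) = (\<Prod>k<K. h (2*k) * (h (2*k+1) :: real))"
  by (induction K) (simp_all add: mult_ac)

lemma prod_blocks_concat: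
  "(\<Prod>j<(T::nat). \<Prod>k\<in>{j*m..<(j+1)*m}. e k) = (\<Prod>k<T*m. (e k :: real))"
proof (induction T)
  case (Suc T)
  have "(\<Prod>k<Suc T*m. e k) = (\<Prod>k\<in>{0..<T*m}. e k) * (\<Prod>k\<in>{T*m..<(T+1)*m}. e k)"
    by (subst prod.atLeastLessThan_concat) (auto simp: atLeast0LessThan)
  then show ?case using Suc by (simp add: atLeast0LessThan)
qed simp

lemma dig_inj: "u < b^(K::nat) \<Longrightarrow> v < b^K \<Longrightarrow> (\<forall>k<K. dig b u k = dig b v k) \<Longrightarrow> u = v"
proof (induction K arbitrary: u v)
  case 0 then show ?case by simp
next
  case (Suc K)
  have b: "0 < b" using Suc.prems(1) by (cases b) auto
  have m: "u mod b = v mod b" using Suc.prems(3)[rule_format, of 0] by (simp add: dig_def)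
  have "u div b = v div b"
  proof (rule Suc.IH)
    show "u div b < b^K" "v div b < b^K" using Suc.prems(1,2) b
      by (simp_all add: div_less_iff_less_mult mult.commute)
    show "\<forall>k<K. dig b (u div b) k = dig b (v div b) k"
      using Suc.prems(3) by (auto simp: dig_def div_mult2_eq)
  qed
  then show ?case using m by (metis div_mult_mod_eq)
qed



definition f0 :: "nat \<Rightarrow> nat \<Rightarrow> nat \<Rightarrow> nat \<Rightarrow> nat \<Rightarrow> real" where
  "f0 L1 L2 l g a = (if l < L2 then (if g = a then 1 else 0)
     else if l = L2 then (if g = 0 then 1 else 0)
     else if l < L1 then (if g = 0 \<and> a = 0 then 1 else 0)
     else (if a = 0 then 1 else 0))"

lemma mem0: "j < 2^L \<Longrightarrow> g < r 0 \<Longrightarrow> a < M \<Longrightarrow> (0,j,g,a) \<in> param_index L M Lc r"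
  by (auto simp: param_index_def)
lemma memS: "1 \<le> l \<Longrightarrow> l < Lc \<Longrightarrow> j < 2^L div 2^l \<Longrightarrow> g < r l \<Longrightarrow> a < r (l-1) \<Longrightarrow>
  (l,j,g,a) \<in> param_index L M Lc r"
  by (auto simp: param_index_def)
lemma memT: "a < r (Lc-1) \<Longrightarrow> (Lc,0,0,a) \<in> param_index L M Lc r"
  by (auto simp: param_index_def)

lemma pow_div: "l \<le> L \<Longrightarrow> (2::nat)^L div 2^l = 2^(L-l)"
  by (simp add: power_diff)

lemma sum_delta_mult: "(\<Sum>\<alpha><(R::nat). (if g = \<alpha> then 1 else 0) * (X \<alpha> :: real)) = (if g < R then X g else 0)"
proof -
  have "(\<Sum>\<alpha><R. (if g = \<alpha> then 1 else 0) * X \<alpha>) = (\<Sum>\<alpha><R. if \<alpha> = g then X \<alpha> else 0)"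
    by (rule sum.cong) auto
  also have "\<dots> = (if g \<in> {..<R} then X g else 0)" by (rule sum.delta) simp
  finally show ?thesis by simp
qed

lemma sum_delta2: "(\<Sum>\<alpha><(R::nat). (if \<alpha> = a then 1 else 0) * ((if \<alpha> = b then 1 else 0)::real)) = (if a < R \<and> a = b then 1 else 0)"
proof -
  have "(\<Sum>\<alpha><R. (if \<alpha> = a then 1 else 0) * ((if \<alpha> = b then 1 else 0)::real)) =
    (\<Sum>\<alpha><R. if \<alpha> = a then (if a = b then 1 else 0) else 0)"
    by (rule sum.cong) auto
  also have "\<dots> = (if a \<in> {..<R} then (if a = b then 1 else 0) else 0)" by (rule sum.delta) simp
  finally show ?thesis by simp
qed

context
  fixes L M L1 L2 :: nat and r1 :: "nat \<Rightarrow> nat" and rr :: nat and \<theta> :: "pidx \<Rightarrow> real"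
  assumes L1L: "L1 \<le> L" and L21: "L2 < L1" and L2p: "1 \<le> L2"
    and rpos: "\<forall>l<L1. r1 l > 0"
    and rrM: "rr \<le> M" and rrr: "\<forall>l<L2. rr \<le> r1 l"
    and h\<theta>: "\<forall>l j g a. (l,j,g,a) \<in> param_index L M L1 r1 \<longrightarrow> \<theta> (l,j,g,a) = f0 L1 L2 l g a"
begin

lemma low: "l < L2 \<Longrightarrow> j < 2^(L-l) \<Longrightarrow> g < r1 l \<Longrightarrow> a < rr \<Longrightarrow>
  phi \<theta> r1 l j g (replicate (2^l) a) = (if g = a then 1 else 0)"
proof (induction l arbitrary: j g)
  case 0
  have "(0,j,g,a) \<in> param_index L M L1 r1" using 0 rrM by (intro mem0) auto
  then show ?case using h\<theta> 0 by (simp add: f0_def)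
next
  case (Suc l)
  have lL: "Suc l \<le> L" using Suc.prems L21 L1L by simp
  have jb: "2*j < 2^(L-l)" "2*j+1 < 2^(L-l)"
    using Suc.prems(2) lL by (simp_all add: Suc_diff_Suc[symmetric])
  have rep: "take (2^l) (replicate (2^Suc l) a) = replicate (2^l) a"
            "drop (2^l) (replicate (2^Suc l) a) = replicate (2^l) a" by simp_all
  have "phi \<theta> r1 (Suc l) j g (replicate (2^Suc l) a) =
      (\<Sum>\<alpha><r1 l. (if g = \<alpha> then 1 else 0) * ((if \<alpha> = a then 1 else 0) * (if \<alpha> = a then 1 else 0)))"
  proof (simp only: phi.simps tprod_def rep, rule sum.cong[OF refl])
    fix \<alpha> assume \<alpha>: "\<alpha> \<in> {..<r1 l}"
    have jb0: "j < 2^L div 2^(Suc l)" using pow_div[OF lL] Suc.prems(2) by simp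
    have "(Suc l,j,g,\<alpha>) \<in> param_index L M L1 r1"
      using Suc.prems \<alpha> L21 lL jb0 by (intro memS) auto
    then have "\<theta> (Suc l, j, g, \<alpha>) = (if g = \<alpha> then 1 else 0)" using h\<theta> Suc.prems by (simp add: f0_def)
    moreover have "phi \<theta> r1 l (2*j) \<alpha> (replicate (2^l) a) = (if \<alpha> = a then 1 else 0)"
      "phi \<theta> r1 l (2*j+1) \<alpha> (replicate (2^l) a) = (if \<alpha> = a then 1 else 0)"
      using Suc.IH[OF _ jb(1)] Suc.IH[OF _ jb(2)] Suc.prems \<alpha> by auto
    ultimately show "\<theta> (Suc l, j, g, \<alpha>) *
         (phi \<theta> r1 l (2 * j) \<alpha> (replicate (2 ^ l) a) * phi \<theta> r1 l (2 * j + 1) \<alpha> (replicate (2 ^ l) a)) =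
         (if g = \<alpha> then 1 else 0) * ((if \<alpha> = a then 1 else 0) * (if \<alpha> = a then 1 else 0))" by simp
  qed
  also have "\<dots> = (if g = a then 1 else 0)"
    using rrr[rule_format, of l] Suc.prems by (subst sum_delta_mult) auto
  finally show ?case .
qed

lemma win_low: assumes "L2 = Suc l'" "j < 2^(L-L2)"
  shows "win l' (2*j) (dsv (2^(L2-1)) rr (2^(L-L2)) u v) = replicate (2^l') (dig rr u j)"
        "win l' (2*j+1) (dsv (2^(L2-1)) rr (2^(L-L2)) u v) = replicate (2^l') (dig rr v j)"
proof -
  have "2*j < 2*2^(L-L2)" "2*j+1 < 2*2^(L-L2)" using assms by auto
  then show "win l' (2*j) (dsv (2^(L2-1)) rr (2^(L-L2)) u v) = replicate (2^l') (dig rr u j)"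
        "win l' (2*j+1) (dsv (2^(L2-1)) rr (2^(L-L2)) u v) = replicate (2^l') (dig rr v j)"
    unfolding win_def using assms(1) by (simp only: diff_Suc_1 dsv_block, simp add: blk_def)+
qed

lemma high: "L2 + d < L1 \<Longrightarrow> j < 2^(L-(L2+d)) \<Longrightarrow> g < r1 (L2+d) \<Longrightarrow> 0 < rr \<Longrightarrow>
  phi \<theta> r1 (L2+d) j g (win (L2+d) j (dsv (2^(L2-1)) rr (2^(L-L2)) u v)) =
  (if g = 0 then 1 else 0) * (\<Prod>k\<in>{j*2^d..<(j+1)*2^d}. if dig rr u k = dig rr v k then 1 else 0)"
proof (induction d arbitrary: j g)
  case 0
  obtain l' where l': "L2 = Suc l'" using L2p by (cases L2) auto
  let ?ds = "dsv (2^(L2-1)) rr (2^(L-L2)) u v"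
  have jK: "j < 2^(L-L2)" using 0 by simp
  have du: "dig rr u j < rr" "dig rr v j < rr" using 0 by (simp_all add: dig_lt)
  have lL: "L2 \<le> L" using L21 L1L by simp
  have jb0: "j < 2^L div 2^L2" using pow_div[OF lL] jK by simp
  have jb: "2*j < 2^(L-l')" "2*j+1 < 2^(L-l')" using jK lL l' by (simp_all add: Suc_diff_Suc[symmetric])
  have "phi \<theta> r1 (L2+0) j g (win (L2+0) j ?ds) =
     (\<Sum>\<alpha><r1 l'. (if g = 0 then 1 else 0) * ((if \<alpha> = dig rr u j then 1 else 0) * (if \<alpha> = dig rr v j then 1 else 0)))"
  proof (simp only: l' add_0_right phi.simps tprod_win win_low[OF l' jK, unfolded l'], rule sum.cong[OF refl])
    fix \<alpha> assume \<alpha>: "\<alpha> \<in> {..<r1 l'}"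
    have "(Suc l',j,g,\<alpha>) \<in> param_index L M L1 r1"
      using 0 \<alpha> L21 jb0 l' by (intro memS) auto
    then have "\<theta> (Suc l', j, g, \<alpha>) = (if g = 0 then 1 else 0)" using h\<theta> l' by (simp add: f0_def)
    moreover have "phi \<theta> r1 l' (2*j) \<alpha> (replicate (2^l') (dig rr u j)) = (if \<alpha> = dig rr u j then 1 else 0)"
      "phi \<theta> r1 l' (2*j+1) \<alpha> (replicate (2^l') (dig rr v j)) = (if \<alpha> = dig rr v j then 1 else 0)"
      using low[OF _ jb(1)] low[OF _ jb(2)] \<alpha> du l' by auto
    ultimately show "\<theta> (Suc l', j, g, \<alpha>) *
         (phi \<theta> r1 l' (2 * j) \<alpha> (replicate (2 ^ l') (dig rr u j)) * phi \<theta> r1 l' (2 * j + 1) \<alpha> (replicate (2 ^ l') (dig rr v j))) =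
         (if g = 0 then 1 else 0) * ((if \<alpha> = dig rr u j then 1 else 0) * (if \<alpha> = dig rr v j then 1 else 0))" by simp
  qed
  also have "\<dots> = (if g = 0 then 1 else 0) * (if dig rr u j = dig rr v j then 1 else 0)"
  proof -
    have "dig rr u j < r1 l'" using du rrr l' by fastforce
    then show ?thesis
      by (simp add: sum_distrib_left[symmetric] sum_delta2)
  qed
  finally show ?case by simp
next
  case (Suc d)
  let ?ds = "dsv (2^(L2-1)) rr (2^(L-L2)) u v"
  let ?l = "L2 + d"
  let ?e = "\<lambda>k. if dig rr u k = dig rr v k then 1 else (0::real)"
  have lL: "Suc ?l \<le> L" using Suc.prems L1L by simp
  have jb0: "j < 2^L div 2^(Suc ?l)" using pow_div[OF lL] Suc.prems(2) by simp
  have jb: "2*j < 2^(L-?l)" "2*j+1 < 2^(L-?l)"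
    using Suc.prems(2) lL by (simp_all add: Suc_diff_Suc[symmetric])
  have r0: "0 < r1 ?l" using rpos Suc.prems by auto
  have IH: "phi \<theta> r1 ?l (2*j) 0 (win ?l (2*j) ?ds) = (\<Prod>k\<in>{2*j*2^d..<(2*j+1)*2^d}. ?e k)"
           "phi \<theta> r1 ?l (2*j+1) 0 (win ?l (2*j+1) ?ds) = (\<Prod>k\<in>{(2*j+1)*2^d..<(2*j+1+1)*2^d}. ?e k)"
    using Suc.IH[OF _ jb(1)] Suc.IH[OF _ jb(2)] Suc.prems r0 by auto
  have "phi \<theta> r1 (L2 + Suc d) j g (win (L2 + Suc d) j ?ds) =
     (\<Sum>\<alpha><r1 ?l. (if g = 0 then 1 else 0) * (if \<alpha> = 0 then
        phi \<theta> r1 ?l (2*j) 0 (win ?l (2*j) ?ds) * phi \<theta> r1 ?l (2*j+1) 0 (win ?l (2*j+1) ?ds) else 0))"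
  proof (simp only: add_Suc_right phi.simps tprod_win, rule sum.cong[OF refl])
    fix \<alpha> assume \<alpha>: "\<alpha> \<in> {..<r1 ?l}"
    have "(Suc ?l,j,g,\<alpha>) \<in> param_index L M L1 r1"
      using Suc.prems \<alpha> jb0 by (intro memS) auto
    then have "\<theta> (Suc ?l, j, g, \<alpha>) = (if g = 0 \<and> \<alpha> = 0 then 1 else 0)" using h\<theta> Suc.prems by (simp add: f0_def)
    then show "\<theta> (Suc ?l, j, g, \<alpha>) *
         (phi \<theta> r1 ?l (2 * j) \<alpha> (win ?l (2*j) ?ds) * phi \<theta> r1 ?l (2 * j + 1) \<alpha> (win ?l (2*j+1) ?ds)) =
         (if g = 0 then 1 else 0) * (if \<alpha> = 0 then
        phi \<theta> r1 ?l (2*j) 0 (win ?l (2*j) ?ds) * phi \<theta> r1 ?l (2*j+1) 0 (win ?l (2*j+1) ?ds) else 0)" by simp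
  qed
  also have "\<dots> = (if g = 0 then 1 else 0) * ((\<Prod>k\<in>{2*j*2^d..<(2*j+1)*2^d}. ?e k) * (\<Prod>k\<in>{(2*j+1)*2^d..<(2*j+1+1)*2^d}. ?e k))"
    using r0 unfolding IH[symmetric] by (simp add: sum_distrib_left[symmetric])
  also have "(\<Prod>k\<in>{2*j*2^d..<(2*j+1)*2^d}. ?e k) * (\<Prod>k\<in>{(2*j+1)*2^d..<(2*j+1+1)*2^d}. ?e k)
     = (\<Prod>k\<in>{j*2^Suc d..<(j+1)*2^Suc d}. ?e k)"
  proof -
    have "(\<Prod>k\<in>{2*j*2^d..<(2*j+1)*2^d}. ?e k) * (\<Prod>k\<in>{(2*j+1)*2^d..<(2*j+1+1)*2^d}. ?e k)
      = (\<Prod>k\<in>{2*j*2^d..<(2*j+1+1)*2^d}. ?e k)"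
      by (rule prod.atLeastLessThan_concat) auto
    also have "{2*j*2^d..<(2*j+1+1)*2^d} = {j*2^Suc d..<(j+1)*2^Suc d}" by (simp add: algebra_simps)
    finally show ?thesis .
  qed
  finally show ?case .
qed

lemma top: "0 < rr \<Longrightarrow> gen_tensor L L1 r1 \<theta> (dsv (2^(L2-1)) rr (2^(L-L2)) u v) =
   (\<Prod>k<2^(L-L2). if dig rr u k = dig rr v k then 1 else 0)"
proof -
  assume rr: "0 < rr"
  let ?ds = "dsv (2^(L2-1)) rr (2^(L-L2)) u v"
  let ?e = "\<lambda>k. if dig rr u k = dig rr v k then 1 else (0::real)"
  define d where "d = L1 - 1 - L2"
  have d: "L2 + d = L1 - 1" using L21 by (simp add: d_def)
  have r0: "0 < r1 (L1-1)" using rpos L21 by auto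
  have th: "\<theta> (L1,0,0,\<alpha>) = (if \<alpha> = 0 then 1 else 0)" if "\<alpha> < r1 (L1-1)" for \<alpha>
    using h\<theta> memT[of \<alpha> r1 L1 L M, OF that] L21 by (simp add: f0_def)
  have "gen_tensor L L1 r1 \<theta> ?ds = (\<Sum>\<alpha><r1 (L1-1). (if \<alpha> = 0 then 1 else 0) *
      (\<Prod>j<2^(L-L1+1). phi \<theta> r1 (L1-1) j \<alpha> (win (L1-1) j ?ds)))"
    unfolding gen_tensor_def tprod_blocks_def win_def by (rule sum.cong) (auto simp: th)
  also have "\<dots> = (\<Prod>j<2^(L-L1+1). phi \<theta> r1 (L1-1) j 0 (win (L1-1) j ?ds))"
    using r0 by (subst sum_delta_mult[of 0, simplified eq_commute[of 0]]) simp
  also have "\<dots> = (\<Prod>j<2^(L-L1+1). (\<Prod>k\<in>{j*2^d..<(j+1)*2^d}. ?e k))"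
  proof (rule prod.cong[OF refl])
    fix j :: nat assume j: "j \<in> {..<2^(L-L1+1)}"
    have "j < 2^(L-(L2+d))" using j d L21 L1L by (simp add: Suc_diff_le)
    then show "phi \<theta> r1 (L1-1) j 0 (win (L1-1) j ?ds) = (\<Prod>k\<in>{j*2^d..<(j+1)*2^d}. ?e k)"
      using high[of d j 0 u v] d rr r0 L21 by simp
  qed
  also have "\<dots> = (\<Prod>k<2^(L-L1+1)*2^d. ?e k)" by (rule prod_blocks_concat)
  also have "(2::nat)^(L-L1+1)*2^d = 2^(L-L2)"
  proof -
    have e: "L - L1 + 1 + d = L - L2" using L21 L1L by (simp add: d_def)
    show ?thesis by (simp only: power_add[symmetric] e)
  qed
  finally show ?thesis .
qed

lemma prod_ind: "(\<Prod>k<(K::nat). if P k then 1 else (0::real)) = (if \<forall>k<K. P k then 1 else 0)"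
  by (induction K) (auto simp: less_Suc_eq)

lemma wit_det: "Determinant.det (mat (rr^(2^(L-L2))) (rr^(2^(L-L2)))
   (\<lambda>(u,v). gen_tensor L L1 r1 \<theta> (dsv (2^(L2-1)) rr (2^(L-L2)) u v))) = 1"
proof -
  let ?n = "rr^(2^(L-L2))"
  have "mat ?n ?n (\<lambda>(u,v). gen_tensor L L1 r1 \<theta> (dsv (2^(L2-1)) rr (2^(L-L2)) u v)) = 1\<^sub>m ?n"
  proof (rule eq_matI)
    fix u v assume uv: "u < dim_row (1\<^sub>m ?n)" "v < dim_col (1\<^sub>m ?n)"
    then have u: "u < ?n" and v: "v < ?n" by auto
    then have rr: "0 < rr" by (cases rr) (auto simp: power_0_left)
    have "gen_tensor L L1 r1 \<theta> (dsv (2^(L2-1)) rr (2^(L-L2)) u v) = (if u = v then 1 else 0)"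
      unfolding top[OF rr] prod_ind using dig_inj[OF u v] by auto
    then show "mat ?n ?n (\<lambda>(u,v). gen_tensor L L1 r1 \<theta> (dsv (2^(L2-1)) rr (2^(L-L2)) u v)) $$ (u,v) = 1\<^sub>m ?n $$ (u,v)"
      using u v by simp
  qed auto
  then show ?thesis by simp
qed

end


lemma low_det:
  assumes L2: "1 \<le> L2" "L2 \<le> L" and rrM: "rr \<le> M" and lr: "low_rep L M L2 rr A"
  shows "Determinant.det (mat (rr^(2^(L-L2))) (rr^(2^(L-L2)))
     (\<lambda>(u,v). A (dsv (2^(L2-1)) rr (2^(L-L2)) u v))) = 0"
proof -
  let ?K = "2^(L-L2)::nat" and ?p = "2^(L2-1)::nat"
  let ?n = "rr^?K"
  obtain r2 \<theta>2 where r2: "\<forall>l<L2. r2 l > 0" "r2 (L2 - 1) < ?n"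
    and eq: "tensor_eq (2^L) M (gen_tensor L L2 r2 \<theta>2) A"
    using lr unfolding low_rep_def by blast
  let ?R = "r2 (L2-1)"
  define X where "X u \<alpha> = \<theta>2 (L2,0,0,\<alpha>) * (\<Prod>k<?K. phi \<theta>2 r2 (L2-1) (2*k) \<alpha> (replicate ?p (dig rr u k)))" for u \<alpha>
  define Y where "Y \<alpha> v = (\<Prod>k<?K. phi \<theta>2 r2 (L2-1) (2*k+1) \<alpha> (replicate ?p (dig rr v k)))" for \<alpha> v
  show ?thesis
  proof (rule det_lowrank[OF r2(2)])
    fix u v assume u: "u < ?n" and v: "v < ?n"
    then have rr: "0 < rr" by (cases rr) (auto simp: power_0_left)
    let ?ds = "dsv ?p rr ?K u v"
    have len: "length ?ds = 2^L"
    proof -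
      have "2 * ?K * ?p = 2^(1 + (L-L2) + (L2-1))" by (simp add: power_add)
      also have "1 + (L-L2) + (L2-1) = L" using L2 by simp
      finally show ?thesis by (simp add: dsv_length)
    qed
    have ent: "\<forall>d\<in>set ?ds. d < M" using dsv_set[OF rr] rrM by fastforce
    have "A ?ds = gen_tensor L L2 r2 \<theta>2 ?ds" using eq len ent unfolding tensor_eq_def by auto
    also have "\<dots> = (\<Sum>\<alpha><?R. \<theta>2 (L2,0,0,\<alpha>) * (\<Prod>j<2*?K. phi \<theta>2 r2 (L2-1) j \<alpha> (blk ?p rr u v j)))"
    proof -
      have e: "L - L2 + 1 = Suc (L - L2)" by simp
      show ?thesis unfolding gen_tensor_def tprod_blocks_def e power_Suc
        by (intro sum.cong refl arg_cong2[where f="(*)"] prod.cong) (auto simp: dsv_block)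
    qed
    also have "\<dots> = (\<Sum>\<alpha><?R. X u \<alpha> * Y \<alpha> v)"
      unfolding prod_evenodd X_def Y_def by (simp add: blk_def prod.distrib mult.assoc)
    finally show "A ?ds = (\<Sum>\<alpha><?R. X u \<alpha> * Y \<alpha> v)" .
  qed
qed



lemma finite_param: "finite (param_index L M Lc r)"
proof (rule finite_subset)
  show "param_index L M Lc r \<subseteq> (SIGMA l:{..Lc}. {..<2^L} \<times> {..<Suc (r l)} \<times> {..<M + r (l-1)})"
    by (auto simp: param_index_def intro: less_le_trans[OF _ div_le_dividend])
qed auto

lemma finite_shared: "finite (shared_index M Lc r)"
proof (rule finite_subset)
  show "shared_index M Lc r \<subseteq> (SIGMA l:{..Lc}. {..<Suc (r l)} \<times> {..<M + r (l-1)})"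
    by (auto simp: shared_index_def)
qed auto

theorem theorem2:
  fixes L M L1 L2 :: nat and r1 :: "nat \<Rightarrow> nat"
  assumes "L1 \<le> L" and "L2 < L1" and "1 \<le> L2"
    and "\<forall>l<L1. r1 l > 0"
  defines "rr \<equiv> Min (r1 ` {..<L2} \<union> {M})"
  shows "{\<theta> \<in> param_index L M L1 r1 \<rightarrow>\<^sub>E UNIV.
            low_rep L M L2 rr (gen_tensor L L1 r1 \<theta>)}
           \<in> null_sets (completion (PiM (param_index L M L1 r1) (\<lambda>_. lborel))) \<and>
         {\<theta>s \<in> shared_index M L1 r1 \<rightarrow>\<^sub>E UNIV.
            low_rep L M L2 rr (gen_tensor L L1 r1 (expand_shared \<theta>s))}
           \<in> null_sets (completion (PiM (shared_index M L1 r1) (\<lambda>_. lborel)))"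
proof -
  note A = assms(1-4)
  have rrM: "rr \<le> M" unfolding rr_def by (rule Min_le) auto
  have rrr: "\<forall>l<L2. rr \<le> r1 l" unfolding rr_def by (auto intro: Min_le)
  have L2L: "L2 \<le> L" using A by simp
  let ?K = "2^(L-L2)::nat" and ?p = "2^(L2-1)::nat"
  let ?n = "rr^?K"
  define F where "F T = Determinant.det (mat ?n ?n (\<lambda>(u,v). gen_tensor L L1 r1 T (dsv ?p rr ?K u v)))" for T
  have Fpoly: "poly_fun (\<lambda>\<theta>. F (\<lambda>x. \<theta> (c x)))" for c :: "pidx \<Rightarrow> 'i"
    unfolding F_def by (rule poly_det) (rule poly_gen)
  have Flow: "F T = 0" if "low_rep L M L2 rr (gen_tensor L L1 r1 T)" for T
    unfolding F_def using low_det[OF A(3) L2L rrM that] .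
  have Fwit: "F T = 1" if "\<forall>l j g a. (l,j,g,a) \<in> param_index L M L1 r1 \<longrightarrow> T (l,j,g,a) = f0 L1 L2 l g a" for T
    unfolding F_def using wit_det[OF A rrM rrr that] .
  show ?thesis
  proof
    let ?I = "param_index L M L1 r1"
    define \<theta>0 where "\<theta>0 = restrict (\<lambda>(l,j,g,a). f0 L1 L2 l g a) ?I"
    have t0: "\<theta>0 \<in> ?I \<rightarrow>\<^sub>E UNIV" by (simp add: \<theta>0_def)
    have "F \<theta>0 = 1" by (rule Fwit) (simp add: \<theta>0_def)
    then have "F (\<lambda>x. \<theta>0 ((\<lambda>x. x) x)) \<noteq> 0" by simp
    from poly_zero_null[OF finite_param Fpoly t0 this]
    have N: "{\<theta> \<in> ?I \<rightarrow>\<^sub>E UNIV. F \<theta> = 0} \<in> null_sets (PiM ?I (\<lambda>_. lborel))" by simp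
    show "{\<theta> \<in> ?I \<rightarrow>\<^sub>E UNIV. low_rep L M L2 rr (gen_tensor L L1 r1 \<theta>)}
           \<in> null_sets (completion (PiM ?I (\<lambda>_. lborel)))"
      by (rule null_sets_completion_subset[OF _ null_sets_completionI[OF N]]) (auto intro: Flow)
  next
    let ?I = "shared_index M L1 r1"
    let ?c = "\<lambda>(l::nat,j::nat,g::nat,a::nat). (l,g,a)"
    have es: "expand_shared T = (\<lambda>x. T (?c x))" for T
      by (auto simp: expand_shared_def)
    define \<theta>0 where "\<theta>0 = restrict (\<lambda>(l,g,a). f0 L1 L2 l g a) ?I"
    have t0: "\<theta>0 \<in> ?I \<rightarrow>\<^sub>E UNIV" by (simp add: \<theta>0_def)
    have mem: "(l,g,a) \<in> ?I" if "(l,j,g,a) \<in> param_index L M L1 r1" for l j g a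
      using that by (auto simp: param_index_def shared_index_def)
    have "F (expand_shared \<theta>0) = 1" by (rule Fwit) (auto simp: \<theta>0_def expand_shared_def mem)
    then have "F (\<lambda>x. \<theta>0 (?c x)) \<noteq> 0" by (simp add: es)
    from poly_zero_null[OF finite_shared Fpoly t0 this]
    have N: "{\<theta> \<in> ?I \<rightarrow>\<^sub>E UNIV. F (expand_shared \<theta>) = 0} \<in> null_sets (PiM ?I (\<lambda>_. lborel))"
      by (simp add: es)
    show "{\<theta>s \<in> ?I \<rightarrow>\<^sub>E UNIV. low_rep L M L2 rr (gen_tensor L L1 r1 (expand_shared \<theta>s))}
           \<in> null_sets (completion (PiM ?I (\<lambda>_. lborel)))"
      by (rule null_sets_completion_subset[OF _ null_sets_completionI[OF N]]) (auto intro: Flow)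
  qed
qed

end
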